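(* Let $H=K_2\vee\overline{K_2}$ (i.e. $K_4$ minus an edge), and let $v$ be a vertex of degree $2$ in $H$. Then the line graph $L(H)$ has no $f_{3,v}$-kernel-perfect orientation. Equivalently, $H$ is not $f_{3,v}$-edge-orientable.
   Context: $G_1\vee G_2$ denotes the join: the disjoint union of $G_1$ and $G_2$ plus all edges between them. $\overline{K_2}$ is the edgeless graph on $2$ vertices. An orientation of a graph is any digraph obtained by replacing each edge $uv$ with the arc $(u,v)$, with the arc $(v,u)$, or with both arcs. A kernel of a digraph $D$ is an independent set $S$ such that every vertex of $D-S$ has an out-neighbor in $S$. $D$ is kernel-perfect if every induced subdigraph of $D$ has a kernel. For $f:V\to\mathbb{N}$, an orientation $D$ is $f$-kernel-perfect if it is kernel-perfect and $f(x)\ge 1+d^+_D(x)$ for every vertex $x$. For $v\in V(H)$, $f_{3,v}:E(H)\to\mathbb{N}$ is defined by $f_{3,v}(e)=d_H(v)$ if $e$ is incident to $v$, and $f_{3,v}(e)=3$ otherwise. *)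

theory Defs
  imports Main
begin

text \<open>A finite simple graph is a pair (V, E) of a vertex set and a set of
  2-element edges {u,w} with u, w in V, u \<noteq> w.\<close>

type_synonym 'a graph = "'a set \<times> 'a set set"

definition verts :: "'a graph \<Rightarrow> 'a set" where "verts G = fst G"
definition edges :: "'a graph \<Rightarrow> 'a set set" where "edges G = snd G"

definition complete_graph :: "'a set \<Rightarrow> 'a graph" where
  "complete_graph V = (V, {{u, w} | u w. u \<in> V \<and> w \<in> V \<and> u \<noteq> w})"

definition edgeless_graph :: "'a set \<Rightarrow> 'a graph" where
  "edgeless_graph V = (V, {})"

definition graph_join :: "'a graph \<Rightarrow> 'b graph \<Rightarrow> ('a + 'b) graph" where
  "graph_join G1 G2 =
     (Inl ` verts G1 \<union> Inr ` verts G2,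
      (\<lambda>e. Inl ` e) ` edges G1 \<union> (\<lambda>e. Inr ` e) ` edges G2 \<union>
      {{Inl u, Inr w} | u w. u \<in> verts G1 \<and> w \<in> verts G2})"

definition degree :: "'a graph \<Rightarrow> 'a \<Rightarrow> nat" where
  "degree G v = card {e \<in> edges G. v \<in> e}"

definition line_graph :: "'a graph \<Rightarrow> 'a set graph" where
  "line_graph G = (edges G,
     {{e, e'} | e e'. e \<in> edges G \<and> e' \<in> edges G \<and> e \<noteq> e' \<and> e \<inter> e' \<noteq> {}})"

definition is_orientation :: "'a graph \<Rightarrow> ('a \<times> 'a) set \<Rightarrow> bool" where
  "is_orientation G A \<longleftrightarrow>
     (\<forall>(u, w) \<in> A. {u, w} \<in> edges G \<and> u \<noteq> w) \<and>
     (\<forall>u w. {u, w} \<in> edges G \<and> u \<noteq> w \<longrightarrow> (u, w) \<in> A \<or> (w, u) \<in> A)"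

definition is_kernel :: "'a set \<Rightarrow> ('a \<times> 'a) set \<Rightarrow> 'a set \<Rightarrow> bool" where
  "is_kernel W A S \<longleftrightarrow> S \<subseteq> W \<and> (\<forall>x \<in> S. \<forall>y \<in> S. (x, y) \<notin> A) \<and>
     (\<forall>x \<in> W - S. \<exists>y \<in> S. (x, y) \<in> A)"

definition kernel_perfect :: "'a set \<Rightarrow> ('a \<times> 'a) set \<Rightarrow> bool" where
  "kernel_perfect V A \<longleftrightarrow> (\<forall>W \<subseteq> V. \<exists>S. is_kernel W (A \<inter> (W \<times> W)) S)"

definition out_degree :: "('a \<times> 'a) set \<Rightarrow> 'a \<Rightarrow> nat" where
  "out_degree A x = card {y. (x, y) \<in> A}"

definition f_kernel_perfect_orientation ::
  "'a graph \<Rightarrow> ('a \<Rightarrow> nat) \<Rightarrow> ('a \<times> 'a) set \<Rightarrow> bool" where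
  "f_kernel_perfect_orientation G f A \<longleftrightarrow>
     is_orientation G A \<and> kernel_perfect (verts G) A \<and>
     (\<forall>x \<in> verts G. f x \<ge> 1 + out_degree A x)"

definition f3 :: "'a graph \<Rightarrow> 'a \<Rightarrow> 'a set \<Rightarrow> nat" where
  "f3 H v e = (if v \<in> e then degree H v else 3)"

definition H_graph :: "(nat + nat) graph" where
  "H_graph = graph_join (complete_graph {0, 1}) (edgeless_graph {0, 1})"

end

theory Submission
  imports Defs
begin
lemma CE: "{{u, w} |u w. u \<in> {0::nat,1} \<and> w \<in> {0,1} \<and> u \<noteq> w} = {{0,1}}"
  by auto
lemma JE: "{{Inl u, Inr w} |u w. u \<in> {0::nat,1} \<and> w \<in> {0::nat,1}} = {{Inl 0, Inr 0}, {Inl 0, Inr 1}, {Inl 1, Inr 0}, {Inl 1, Inr 1}}"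
  by auto
lemma EH: "edges H_graph = {{Inl 0, Inl 1}, {Inl 0, Inr 0}, {Inl 0, Inr 1}, {Inl 1, Inr 0}, {Inl 1, Inr 1}}"
  unfolding H_graph_def graph_join_def complete_graph_def edgeless_graph_def edges_def verts_def
  by (simp only: fst_conv snd_conv CE JE) auto
lemma VH: "verts H_graph = {Inl 0, Inl 1, Inr 0, Inr 1}"
  unfolding H_graph_def graph_join_def complete_graph_def edgeless_graph_def edges_def verts_def
  by auto

lemma am1: "finite S \<Longrightarrow> card S \<le> 1 \<Longrightarrow> p \<in> S \<Longrightarrow> q \<in> S \<Longrightarrow> p = q"
  by (metis card_le_Suc0_iff_eq One_nat_def)
lemma am2: assumes "finite S" "card S \<le> 2" "p \<in> S" "q \<in> S" "r \<in> S" shows "p = q \<or> p = r \<or> q = r"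
proof (rule ccontr)
  assume "\<not> ?thesis"
  then have "card {p,q,r} = 3" by auto
  moreover have "card {p,q,r} \<le> card S" using assms by (intro card_mono) auto
  ultimately show False using assms by simp
qed
lemma tri: assumes "p \<noteq> q" "q \<noteq> r" "p \<noteq> r" "(p,q) \<in> A" "(q,r) \<in> A" "(r,p) \<in> A"
  "(q,p) \<notin> A" "(r,q) \<notin> A" "(p,r) \<notin> A"
  shows "\<not> is_kernel {p,q,r} (A \<inter> ({p,q,r} \<times> {p,q,r})) S"
  using assms unfolding is_kernel_def by (cases "p \<in> S"; cases "q \<in> S"; cases "r \<in> S"; auto)

lemma gen:
  fixes a x y z w :: 'a
  assumes d: "distinct [a,x,y,z,w]"
  and kp: "\<forall>W \<subseteq> {a,x,y,z,w}. \<exists>S. is_kernel W (A \<inter> (W \<times> W)) S"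
  and fin: "\<And>p q. (p,q) \<in> A \<Longrightarrow> q \<in> {a,x,y,z,w}"
  and c1: "(a,x) \<in> A \<or> (x,a) \<in> A" and c2: "(a,y) \<in> A \<or> (y,a) \<in> A"
  and c3: "(a,z) \<in> A \<or> (z,a) \<in> A" and c4: "(a,w) \<in> A \<or> (w,a) \<in> A"
  and c5: "(x,y) \<in> A \<or> (y,x) \<in> A" and c6: "(y,z) \<in> A \<or> (z,y) \<in> A"
  and c7: "(z,w) \<in> A \<or> (w,z) \<in> A" and c8: "(w,x) \<in> A \<or> (x,w) \<in> A"
  and bx: "card {q. (x,q) \<in> A} \<le> 1" and bw: "card {q. (w,q) \<in> A} \<le> 1"
  and ba: "card {q. (a,q) \<in> A} \<le> 2" and by': "card {q. (y,q) \<in> A} \<le> 2"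
  and bz: "card {q. (z,q) \<in> A} \<le> 2"
  shows False
proof -
  have F: "finite {q. (u,q) \<in> A}" for u
    by (rule finite_subset[of _ "{a,x,y,z,w}"]) (use fin in auto)
  have X: "\<And>p q. (x,p) \<in> A \<Longrightarrow> (x,q) \<in> A \<Longrightarrow> p = q" using am1[OF F bx] by blast
  have Wd: "\<And>p q. (w,p) \<in> A \<Longrightarrow> (w,q) \<in> A \<Longrightarrow> p = q" using am1[OF F bw] by blast
  have Ad: "\<And>p q r. (a,p) \<in> A \<Longrightarrow> (a,q) \<in> A \<Longrightarrow> (a,r) \<in> A \<Longrightarrow> p = q \<or> p = r \<or> q = r"
    using am2[OF F ba] by blast
  have Yd: "\<And>p q r. (y,p) \<in> A \<Longrightarrow> (y,q) \<in> A \<Longrightarrow> (y,r) \<in> A \<Longrightarrow> p = q \<or> p = r \<or> q = r"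
    using am2[OF F by'] by blast
  have Zd: "\<And>p q r. (z,p) \<in> A \<Longrightarrow> (z,q) \<in> A \<Longrightarrow> (z,r) \<in> A \<Longrightarrow> p = q \<or> p = r \<or> q = r"
    using am2[OF F bz] by blast
  have T: "\<not> ((p,q) \<in> A \<and> (q,r) \<in> A \<and> (r,p) \<in> A \<and> (q,p) \<notin> A \<and> (r,q) \<notin> A \<and> (p,r) \<notin> A)"
    if "p \<in> {a,x,y,z,w}" "q \<in> {a,x,y,z,w}" "r \<in> {a,x,y,z,w}" "p \<noteq> q" "q \<noteq> r" "p \<noteq> r" for p q r
  proof
    assume h: "(p,q) \<in> A \<and> (q,r) \<in> A \<and> (r,p) \<in> A \<and> (q,p) \<notin> A \<and> (r,q) \<notin> A \<and> (p,r) \<notin> A"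
    have "{p,q,r} \<subseteq> {a,x,y,z,w}" using that by auto
    then obtain S where "is_kernel {p,q,r} (A \<inter> ({p,q,r} \<times> {p,q,r})) S" using kp by blast
    then show False using tri[of p q r A S] that h by blast
  qed
  from d have n: "a\<noteq>x" "a\<noteq>y" "a\<noteq>z" "a\<noteq>w" "x\<noteq>y" "x\<noteq>z" "x\<noteq>w" "y\<noteq>z" "y\<noteq>w" "z\<noteq>w" by auto
  have t1: "\<not> ((a,x) \<in> A \<and> (x,w) \<in> A \<and> (w,a) \<in> A \<and> (x,a) \<notin> A \<and> (w,x) \<notin> A \<and> (a,w) \<notin> A)"
    using T[of a x w] n by auto
  have t2: "\<not> ((a,w) \<in> A \<and> (w,x) \<in> A \<and> (x,a) \<in> A \<and> (w,a) \<notin> A \<and> (x,w) \<notin> A \<and> (a,x) \<notin> A)"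
    using T[of a w x] n by auto
  have t3: "\<not> ((a,w) \<in> A \<and> (w,z) \<in> A \<and> (z,a) \<in> A \<and> (w,a) \<notin> A \<and> (z,w) \<notin> A \<and> (a,z) \<notin> A)"
    using T[of a w z] n by auto
  have t4: "\<not> ((a,x) \<in> A \<and> (x,y) \<in> A \<and> (y,a) \<in> A \<and> (x,a) \<notin> A \<and> (y,x) \<notin> A \<and> (a,y) \<notin> A)"
    using T[of a x y] n by auto
  have x1: "\<not> ((x,p) \<in> A \<and> (x,q) \<in> A)" if "p \<noteq> q" for p q using X that by blast
  have w1: "\<not> ((w,p) \<in> A \<and> (w,q) \<in> A)" if "p \<noteq> q" for p q using Wd that by blast
  have a2: "\<not> ((a,p) \<in> A \<and> (a,q) \<in> A \<and> (a,r) \<in> A)" if "p \<noteq> q" "p \<noteq> r" "q \<noteq> r" for p q r using Ad that by blast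
  have y2: "\<not> ((y,p) \<in> A \<and> (y,q) \<in> A \<and> (y,r) \<in> A)" if "p \<noteq> q" "p \<noteq> r" "q \<noteq> r" for p q r using Yd that by blast
  have z2: "\<not> ((z,p) \<in> A \<and> (z,q) \<in> A \<and> (z,r) \<in> A)" if "p \<noteq> q" "p \<noteq> r" "q \<noteq> r" for p q r using Zd that by blast
  show False
    using c1 c2 c3 c4 c5 c6 c7 c8 t1 t2 t3 t4
      x1[OF n(2)] x1[OF n(4)] x1[OF n(9)] x1[OF n(3)] x1[OF n(8)] x1[OF n(10)]
      w1[OF n(3)] w1[OF n(1)] w1[OF n(6)[symmetric]] w1[OF n(2)] w1[OF n(8)[symmetric]] w1[OF n(5)]
      a2[OF n(5) n(6) n(8)] a2[OF n(5) n(7) n(9)] a2[OF n(6) n(7) n(10)] a2[OF n(8) n(9) n(10)]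
      y2[OF n(1)[symmetric] n(6) n(3)] y2[OF n(1)[symmetric] n(7) n(4)] y2[OF n(6) n(7) n(10)] y2[OF n(3) n(4) n(10)]
      z2[OF n(2) n(4) n(9)] z2[OF n(2) n(1) n(5)[symmetric]] z2[OF n(4) n(1) n(7)[symmetric]] z2[OF n(9) n(5)[symmetric] n(7)[symmetric]]
    by sat
qed

lemma degL0: "degree H_graph (Inl 0) = 3"
proof -
  have "{e \<in> edges H_graph. Inl 0 \<in> e} = {{Inl 0, Inl 1}, {Inl 0, Inr 0}, {Inl 0, Inr 1}}"
    unfolding EH by auto
  then show ?thesis unfolding degree_def by (simp add: doubleton_eq_iff)
qed
lemma degL1: "degree H_graph (Inl 1) = 3"
proof -
  have "{e \<in> edges H_graph. Inl 1 \<in> e} = {{Inl 0, Inl 1}, {Inl 1, Inr 0}, {Inl 1, Inr 1}}"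
    unfolding EH by auto
  then show ?thesis unfolding degree_def by (simp add: doubleton_eq_iff)
qed

lemma VL: "verts (line_graph H_graph) = edges H_graph"
  unfolding line_graph_def verts_def by simp

lemma mkedge: "p \<in> edges G \<Longrightarrow> q \<in> edges G \<Longrightarrow> p \<noteq> q \<Longrightarrow> p \<inter> q \<noteq> {} \<Longrightarrow> {p,q} \<in> edges (line_graph G)"
  unfolding line_graph_def edges_def[of "(_,_)"] by auto

lemma finL: "(p,q) \<in> A \<Longrightarrow> is_orientation (line_graph G) A \<Longrightarrow> q \<in> edges G"
  unfolding is_orientation_def line_graph_def edges_def[of "(_,_)"] by (auto simp: doubleton_eq_iff)

lemma coverL: "is_orientation (line_graph G) A \<Longrightarrow> p \<in> edges G \<Longrightarrow> q \<in> edges G \<Longrightarrow> p \<noteq> q \<Longrightarrow> p \<inter> q \<noteq> {}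
   \<Longrightarrow> (p,q) \<in> A \<or> (q,p) \<in> A"
  using mkedge[of p G q] unfolding is_orientation_def by blast

lemma caseR:
  fixes j k :: nat
  assumes jk: "{j,k} = {0,1}" "j \<noteq> k"
  and deg: "degree H_graph (Inr j) = 2"
  and A: "f_kernel_perfect_orientation (line_graph H_graph) (f3 H_graph (Inr j)) A"
  shows False
proof -
  define a :: "(nat+nat) set" where "a = {Inl 0, Inl (1::nat)}"
  define x :: "(nat+nat) set" where "x = {Inl 0, Inr j}"
  define y :: "(nat+nat) set" where "y = {Inl 0, Inr k}"
  define z :: "(nat+nat) set" where "z = {Inl 1, Inr k}"
  define w :: "(nat+nat) set" where "w = {Inl 1, Inr j}"
  have jk2: "(j = 0 \<and> k = 1) \<or> (j = 1 \<and> k = 0)" using jk by (auto simp: doubleton_eq_iff)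
  have E: "edges H_graph = {a,x,y,z,w}" unfolding EH a_def x_def y_def z_def w_def using jk2 by auto
  have or: "is_orientation (line_graph H_graph) A" and kp0: "kernel_perfect (edges H_graph) A"
    and bd: "\<forall>e\<in>edges H_graph. f3 H_graph (Inr j) e \<ge> 1 + out_degree A e"
    using A unfolding f_kernel_perfect_orientation_def VL by auto
  have d: "distinct [a,x,y,z,w]" unfolding a_def x_def y_def z_def w_def using jk
    by (auto simp: doubleton_eq_iff)
  have inE: "a \<in> edges H_graph" "x \<in> edges H_graph" "y \<in> edges H_graph" "z \<in> edges H_graph" "w \<in> edges H_graph"
    unfolding E by auto
  have cv: "p \<in> edges H_graph \<Longrightarrow> q \<in> edges H_graph \<Longrightarrow> p \<noteq> q \<Longrightarrow> p \<inter> q \<noteq> {} \<Longrightarrow> (p,q) \<in> A \<or> (q,p) \<in> A"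
    for p q using coverL[OF or] by blast
  have ne: "a \<inter> x \<noteq> {}" "a \<inter> y \<noteq> {}" "a \<inter> z \<noteq> {}" "a \<inter> w \<noteq> {}" "x \<inter> y \<noteq> {}" "y \<inter> z \<noteq> {}"
    "z \<inter> w \<noteq> {}" "w \<inter> x \<noteq> {}"
    unfolding a_def x_def y_def z_def w_def by auto
  have dd: "a\<noteq>x" "a\<noteq>y" "a\<noteq>z" "a\<noteq>w" "x\<noteq>y" "y\<noteq>z" "z\<noteq>w" "w\<noteq>x" using d by auto
  have f2: "f3 H_graph (Inr j) x = 2" "f3 H_graph (Inr j) w = 2"
    unfolding f3_def deg x_def w_def by auto
  have f3': "f3 H_graph (Inr j) a = 3" "f3 H_graph (Inr j) y = 3" "f3 H_graph (Inr j) z = 3"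
    unfolding f3_def a_def y_def z_def using jk by auto
  show False
  proof (rule gen[OF d])
    show "\<forall>W\<subseteq>{a, x, y, z, w}. \<exists>S. is_kernel W (A \<inter> W \<times> W) S"
      using kp0 unfolding kernel_perfect_def E by blast
    show "\<And>p q. (p, q) \<in> A \<Longrightarrow> q \<in> {a, x, y, z, w}" using finL[OF _ or] E by blast
    show "(a, x) \<in> A \<or> (x, a) \<in> A" by (rule cv) (use inE dd ne in auto)
    show "(a, y) \<in> A \<or> (y, a) \<in> A" by (rule cv) (use inE dd ne in auto)
    show "(a, z) \<in> A \<or> (z, a) \<in> A" by (rule cv) (use inE dd ne in auto)
    show "(a, w) \<in> A \<or> (w, a) \<in> A" by (rule cv) (use inE dd ne in auto)
    show "(x, y) \<in> A \<or> (y, x) \<in> A" by (rule cv) (use inE dd ne in auto)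
    show "(y, z) \<in> A \<or> (z, y) \<in> A" by (rule cv) (use inE dd ne in auto)
    show "(z, w) \<in> A \<or> (w, z) \<in> A" by (rule cv) (use inE dd ne in auto)
    show "(w, x) \<in> A \<or> (x, w) \<in> A" by (rule cv) (use inE dd ne in auto)
    show "card {q. (x, q) \<in> A} \<le> 1" using bd inE f2 unfolding out_degree_def by force
    show "card {q. (w, q) \<in> A} \<le> 1" using bd inE f2 unfolding out_degree_def by force
    show "card {q. (a, q) \<in> A} \<le> 2" using bd inE f3' unfolding out_degree_def by force
    show "card {q. (y, q) \<in> A} \<le> 2" using bd inE f3' unfolding out_degree_def by force
    show "card {q. (z, q) \<in> A} \<le> 2" using bd inE f3' unfolding out_degree_def by force
  qed
qed

theorem mainTheorem19:
  assumes "v \<in> verts H_graph" and "degree H_graph v = 2"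
  shows "\<not> (\<exists>A. f_kernel_perfect_orientation (line_graph H_graph) (f3 H_graph v) A)"
proof
  assume "\<exists>A. f_kernel_perfect_orientation (line_graph H_graph) (f3 H_graph v) A"
  then obtain A where A: "f_kernel_perfect_orientation (line_graph H_graph) (f3 H_graph v) A" by blast
  have "v = Inr 0 \<or> v = Inr 1" using assms degL0 degL1 unfolding VH by auto
  then show False
  proof
    assume "v = Inr 0" then show False using caseR[of 0 1 A] A assms(2) by auto
  next
    assume "v = Inr 1" then show False using caseR[of 1 0 A] A assms(2) by auto
  qed
qed

end
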